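(* Let $\alpha \in [0,1)$ and let $q_\alpha \in \mathcal{P}\big((1+\alpha)/2\big)$. Let $f \in \mathcal{B}$ be locally univalent (i.e. $f'(z)\neq 0$ for $z \in \mathbb{D}\setminus\{0\}$) and suppose that $$|S_f(z)| \leq 2\, q_\alpha(|z|) \quad \text{for all } z \in \mathbb{D}\setminus\{0\}.$$ Then $f \in \mathcal{BC}(\alpha)$. Moreover, the constant $(1+\alpha)/2$ is best possible: for every $\beta < (1+\alpha)/2$ there exist $q \in \mathcal{P}(\beta)$ and a locally univalent $f \in \mathcal{B}$ with $|S_f(z)| \le 2q(|z|)$ on $\mathbb{D}\setminus\{0\}$ such that $f \notin \mathcal{BC}(\alpha)$.
   Context: $\mathbb{D}=\{z\in\mathbb{C}:|z|<1\}$. $\mathcal{B}$ denotes the class of functions $f$ meromorphic in $\mathbb{D}$ of the form $f(z)=\frac1z+a_0+a_1z+a_2z^2+\cdots$ (analytic in $\mathbb{D}\setminus\{0\}$ with a simple pole of residue $1$ at $0$). For a locally univalent function $f$, the Schwarzian derivative is $S_f=\left(\frac{f''}{f'}\right)'-\frac12\left(\frac{f''}{f'}\right)^2$ (it extends analytically across $0$ for $f\in\mathcal B$). For $\alpha\in[0,1)$, $\mathcal{BC}(\alpha)$ is the class of $f\in\mathcal{B}$ with $f'(z)\neq0$ on $\mathbb{D}\setminus\{0\}$ and $\operatorname{Re}\left(1+\frac{zf''(z)}{f'(z)}\right)\le -\alpha$ for $z\in\mathbb{D}\setminus\{0\}$ (meromorphically convex functions of order $\alpha$). For $\gamma\ge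 0$, $\mathcal{P}(\gamma)$ is the class of continuous functions $q:[0,1)\to\mathbb{R}$ such that (a) $q(r)\ge0$ for all $r\in[0,1)$, and (b) the solution $y$ of $y''+qy=0$, $y(0)=0$, $y'(0)=1$, is positive on $(0,1)$ and satisfies $\lim_{x\to1^-} \frac{y'(x)}{y(x)}\ge\gamma$. *)

theory Defs
  imports "HOL-Complex_Analysis.Complex_Analysis" "HOL-Library.Extended_Real"
begin

text \<open>Class B: meromorphic in the unit disc, of the form 1/z + (holomorphic).
  The value of f at 0 is irrelevant (f is a total function in HOL).\<close>
definition classB :: "(complex \<Rightarrow> complex) \<Rightarrow> bool" where
  "classB f \<longleftrightarrow> (\<exists>g. g holomorphic_on ball 0 1 \<and>
      (\<forall>z\<in>ball 0 1 - {0}. f z = 1 / z + g z))"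

definition loc_univalent :: "(complex \<Rightarrow> complex) \<Rightarrow> bool" where
  "loc_univalent f \<longleftrightarrow> (\<forall>z\<in>ball 0 1 - {0}. deriv f z \<noteq> 0)"

definition schwarzian :: "(complex \<Rightarrow> complex) \<Rightarrow> complex \<Rightarrow> complex" where
  "schwarzian f z = deriv (\<lambda>w. deriv (deriv f) w / deriv f w) z
      - 1/2 * (deriv (deriv f) z / deriv f z)^2"

definition classBC :: "real \<Rightarrow> (complex \<Rightarrow> complex) \<Rightarrow> bool" where
  "classBC \<alpha> f \<longleftrightarrow> classB f \<and> loc_univalent f \<and>
     (\<forall>z\<in>ball 0 1 - {0}. Re (1 + z * deriv (deriv f) z / deriv f z) \<le> - \<alpha>)"

definition ode_sol :: "(real \<Rightarrow> real) \<Rightarrow> (real \<Rightarrow> real) \<Rightarrow> (real \<Rightarrow> real) \<Rightarrow> bool" where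
  "ode_sol q y y' \<longleftrightarrow> y 0 = 0 \<and> y' 0 = 1 \<and>
     (\<forall>x\<in>{0..<1}. (y has_real_derivative y' x) (at x within {0..<1}) \<and>
                    (y' has_real_derivative (- q x * y x)) (at x within {0..<1}))"

definition classP :: "real \<Rightarrow> (real \<Rightarrow> real) \<Rightarrow> bool" where
  "classP \<gamma> q \<longleftrightarrow> continuous_on {0..<1} q \<and> (\<forall>r\<in>{0..<1}. q r \<ge> 0) \<and>
     (\<forall>y y'. ode_sol q y y' \<longrightarrow>
        (\<forall>x\<in>{0<..<1}. y x > 0) \<and>
        (\<exists>L. ((\<lambda>x. ereal (y' x / y x)) \<longlongrightarrow> L) (at_left 1) \<and> L \<ge> ereal \<gamma>))"

end

theory Submission
  imports Defs
begin


primrec ys :: "(real \<Rightarrow> real) \<Rightarrow> nat \<Rightarrow> real \<Rightarrow> real" where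
  "ys q 0 = (\<lambda>t. t)"
| "ys q (Suc n) = (\<lambda>t. integral {0..t} (\<lambda>s. - integral {0..s} (\<lambda>r. q r * ys q n r)))"

definition zs :: "(real \<Rightarrow> real) \<Rightarrow> nat \<Rightarrow> real \<Rightarrow> real" where
  "zs q n = (case n of 0 \<Rightarrow> (\<lambda>t. 1) | Suc m \<Rightarrow> (\<lambda>t. - integral {0..t} (\<lambda>r. q r * ys q m r)))"

lemma zs_0[simp]: "zs q 0 = (\<lambda>t. 1)"
  and zs_Suc[simp]: "zs q (Suc m) = (\<lambda>t. - integral {0..t} (\<lambda>r. q r * ys q m r))"
  by (simp_all add: zs_def)

lemma ys_Suc': "ys q (Suc n) = (\<lambda>t. integral {0..t} (zs q (Suc n)))"
  by simp

declare ys.simps(2)[simp del]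

lemma zs_Suc_deriv:
  assumes q: "continuous_on {0..<1} q" and b: "b < 1"
    and c: "continuous_on {0..b} (ys q n)" and x: "x \<in> {0..b}"
  shows "(zs q (Suc n) has_real_derivative (- (q x * ys q n x))) (at x within {0..b})"
proof -
  have "continuous_on {0..b} q" by (rule continuous_on_subset[OF q]) (use b in auto)
  then have h: "continuous_on {0..b} (\<lambda>r. q r * ys q n r)"
    using c by (intro continuous_intros)
  have "((\<lambda>u. integral {0..u} (\<lambda>r. q r * ys q n r)) has_real_derivative (q x * ys q n x)) (at x within {0..b})"
    using integral_has_vector_derivative[OF h x] by (simp add: has_real_derivative_iff_has_vector_derivative)
  then have "((\<lambda>u. - integral {0..u} (\<lambda>r. q r * ys q n r)) has_real_derivative - (q x * ys q n x)) (at x within {0..b})"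
    by (intro derivative_intros)
  then show ?thesis by simp
qed

lemma ys_deriv:
  assumes q: "continuous_on {0..<1} q" and b: "b < 1"
  shows "\<forall>x\<in>{0..b}. (ys q n has_real_derivative zs q n x) (at x within {0..b})"
proof (induction n)
  case 0
  then show ?case by (auto intro!: derivative_eq_intros)
next
  case (Suc n)
  then have c: "continuous_on {0..b} (ys q n)" by (intro DERIV_continuous_on) auto
  have cz: "continuous_on {0..b} (zs q (Suc n))"
    using zs_Suc_deriv[OF q b c] by (intro DERIV_continuous_on) auto
  have "\<forall>x\<in>{0..b}. ((\<lambda>t. integral {0..t} (zs q (Suc n))) has_vector_derivative zs q (Suc n) x) (at x within {0..b})"
    by (intro ballI integral_has_vector_derivative[OF cz])
  then have "\<forall>x\<in>{0..b}. ((\<lambda>t. integral {0..t} (zs q (Suc n))) has_real_derivative zs q (Suc n) x) (at x within {0..b})"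
    by (simp add: has_real_derivative_iff_has_vector_derivative)
  then show ?case by (simp only: ys_Suc')
qed

lemma int_bound:
  fixes h :: "real \<Rightarrow> real"
  assumes h: "continuous_on {0..t} h" and t: "t \<ge> 0" and c: "c \<ge> 0"
    and hb: "\<And>s. s \<in> {0..t} \<Longrightarrow> \<bar>h s\<bar> \<le> c * s^k / fact k"
  shows "\<bar>integral {0..t} h\<bar> \<le> c * t^(Suc k) / fact (Suc k)"
proof -
  have I: "((\<lambda>s. c * s^k / fact k) has_integral (c * t^(Suc k) / fact (Suc k) - c * 0^(Suc k) / fact (Suc k))) {0..t}"
  proof (rule fundamental_theorem_of_calculus[OF t])
    fix x assume "x \<in> {0..t}"
    have "((\<lambda>s. c * s^(Suc k) / fact (Suc k)) has_real_derivative (c * (real (Suc k) * x^k) / fact (Suc k))) (at x within {0..t})"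
      by (intro derivative_eq_intros) auto
    moreover have "c * (real (Suc k) * x^k) / fact (Suc k) = c * x^k / fact k"
    proof -
      have "fact (Suc k) = real (Suc k) * (fact k :: real)" by simp
      then show ?thesis by (simp del: fact_Suc of_nat_Suc)
    qed
    ultimately show "((\<lambda>s. c * s^(Suc k) / fact (Suc k)) has_vector_derivative (c * x^k / fact k)) (at x within {0..t})"
      by (simp add: has_real_derivative_iff_has_vector_derivative)
  qed
  have "norm (integral {0..t} h) \<le> integral {0..t} (\<lambda>s. c * s^k / fact k)"
    using hb I by (intro integral_norm_bound_integral integrable_continuous_real h) (auto simp: has_integral_integrable intro!: continuous_intros)
  also have "\<dots> = c * t^(Suc k) / fact (Suc k)" using integral_unique[OF I] by simp
  finally show ?thesis by simp
qed

lemma ys_zs_bound: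
  assumes q: "continuous_on {0..<1} q" and b: "b < 1" and Q: "Q \<ge> 1"
    and qb: "\<And>x. x \<in> {0..b} \<Longrightarrow> \<bar>q x\<bar> \<le> Q"
  shows "\<forall>t\<in>{0..b}. \<bar>ys q n t\<bar> \<le> Q^n * t^n / fact n \<and> \<bar>zs q n t\<bar> \<le> Q^n * t^n / fact n"
proof (induction n)
  case 0
  then show ?case using b by auto
next
  case (Suc n)
  show ?case
  proof
    fix t assume t: "t \<in> {0..b}"
    have tb: "t < 1" using t b by auto
    have sub: "{0..t} \<subseteq> {0..b}" using t by auto
    have cy: "continuous_on {0..t} (ys q n)"
      using ys_deriv[OF q tb, of n] by (intro DERIV_continuous_on) auto
    have cq: "continuous_on {0..t} q" by (rule continuous_on_subset[OF q]) (use tb in auto)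
    have Qn: "0 \<le> Q^n" "0 \<le> Q^Suc n" using Q by auto
    have z: "\<bar>zs q (Suc n) t\<bar> \<le> Q^(Suc n) * t^(Suc n) / fact (Suc n)"
    proof -
      have "\<bar>integral {0..t} (\<lambda>r. q r * ys q n r)\<bar> \<le> Q^(Suc n) * t^(Suc n) / fact (Suc n)"
      proof (rule int_bound)
        show "continuous_on {0..t} (\<lambda>r. q r * ys q n r)" using cq cy by (intro continuous_intros)
        show "0 \<le> t" using t by auto
        show "0 \<le> Q^Suc n" by fact
        fix s assume s: "s \<in> {0..t}"
        then have "s \<in> {0..b}" using sub by auto
        then have "\<bar>q s\<bar> \<le> Q" "\<bar>ys q n s\<bar> \<le> Q^n * s^n / fact n" using qb Suc by auto
        then have "\<bar>q s\<bar> * \<bar>ys q n s\<bar> \<le> Q * (Q^n * s^n / fact n)"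
          by (intro mult_mono) auto
        then show "\<bar>q s * ys q n s\<bar> \<le> Q ^ Suc n * s ^ n / fact n" by (simp add: abs_mult)
      qed
      then show ?thesis by simp
    qed
    have zall: "\<bar>zs q (Suc n) s\<bar> \<le> Q^(Suc n) * s^(Suc n) / fact (Suc n)" if "s \<in> {0..b}" for s
    proof -
      have sb: "s < 1" using that b by auto
      have cy': "continuous_on {0..s} (ys q n)"
        using ys_deriv[OF q sb, of n] by (intro DERIV_continuous_on) auto
      have cq': "continuous_on {0..s} q" by (rule continuous_on_subset[OF q]) (use sb in auto)
      have "\<bar>integral {0..s} (\<lambda>r. q r * ys q n r)\<bar> \<le> Q^(Suc n) * s^(Suc n) / fact (Suc n)"
      proof (rule int_bound)
        show "continuous_on {0..s} (\<lambda>r. q r * ys q n r)" using cq' cy' by (intro continuous_intros)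
        show "0 \<le> s" using that by auto
        show "0 \<le> Q^Suc n" by fact
        fix r assume r: "r \<in> {0..s}"
        then have "r \<in> {0..b}" using that by auto
        then have "\<bar>q r\<bar> \<le> Q" "\<bar>ys q n r\<bar> \<le> Q^n * r^n / fact n" using qb Suc by auto
        then have "\<bar>q r\<bar> * \<bar>ys q n r\<bar> \<le> Q * (Q^n * r^n / fact n)"
          by (intro mult_mono) auto
        then show "\<bar>q r * ys q n r\<bar> \<le> Q ^ Suc n * r ^ n / fact n" by (simp add: abs_mult)
      qed
      then show ?thesis by simp
    qed
    have y: "\<bar>ys q (Suc n) t\<bar> \<le> Q^(Suc n) * t^(Suc n) / fact (Suc n)"
    proof -
      have cz: "continuous_on {0..t} (zs q (Suc n))"
        using zs_Suc_deriv[OF q tb cy] by (intro DERIV_continuous_on) auto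
      have "\<bar>integral {0..t} (zs q (Suc n))\<bar> \<le> Q^(Suc n) * t^(Suc n) / fact (Suc n)"
      proof (rule int_bound[OF cz])
        show "0 \<le> t" using t by auto
        show "0 \<le> Q^Suc n" by fact
        fix s assume s: "s \<in> {0..t}"
        then have sb: "s \<in> {0..b}" using sub by auto
        have s1: "0 \<le> s" "s \<le> 1" using sb b by auto
        have "s^(Suc n) / fact (Suc n) \<le> s^n / fact n"
        proof -
          have "s^(Suc n) \<le> s^n" using s1 by (simp add: mult_left_le_one_le)
          also have "\<dots> \<le> s^n * real (Suc n)" using s1 by (intro mult_le_cancel_left1[THEN iffD2]) auto
          finally have "s^(Suc n) \<le> s^n * real (Suc n)" .
          then have a: "s^(Suc n) / real (Suc n) \<le> s^n" by (simp add: pos_divide_le_eq del: of_nat_Suc power_Suc)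
          have "fact (Suc n) = real (Suc n) * (fact n :: real)" by simp
          then have "s^(Suc n) / fact (Suc n) = (s^(Suc n) / real (Suc n)) / fact n"
            by (simp del: fact_Suc of_nat_Suc power_Suc)
          also have "\<dots> \<le> s^n / fact n" using a by (intro divide_right_mono) auto
          finally show ?thesis .
        qed
        then have "Q^(Suc n) * (s^(Suc n) / fact (Suc n)) \<le> Q^(Suc n) * (s^n / fact n)"
          using Qn by (intro mult_left_mono) auto
        then show "\<bar>zs q (Suc n) s\<bar> \<le> Q ^ Suc n * s ^ n / fact n"
          using zall[OF sb] by simp
      qed
      then show ?thesis by (simp add: ys_Suc')
    qed
    show "\<bar>ys q (Suc n) t\<bar> \<le> Q^(Suc n) * t^(Suc n) / fact (Suc n) \<and> \<bar>zs q (Suc n) t\<bar> \<le> Q^(Suc n) * t^(Suc n) / fact (Suc n)"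
      using y z by blast
  qed
qed

lemma within_transfer:
  assumes "(f has_real_derivative D) (at x within {0..b})" "x < b" "b < 1"
  shows "(f has_real_derivative D) (at x within {0..<1})"
proof -
  have "at x within {0..b} = at x within {0..<(1::real)}"
    by (rule at_within_nhd[where S="{..<b}"]) (use assms in auto)
  then show ?thesis using assms(1) by simp
qed

lemma ys_at0[simp]: "ys q n 0 = 0"
  by (cases n) (simp_all add: ys_Suc')

lemma zs_at0: "zs q n 0 = (if n = 0 then 1 else 0)"
  by (cases n) simp_all

lemma ode_exists:
  assumes q: "continuous_on {0..<1} q"
  shows "ode_sol q (\<lambda>t. \<Sum>n. ys q n t) (\<lambda>t. \<Sum>n. zs q n t)"
  unfolding ode_sol_def
proof (intro conjI ballI)
  show "(\<Sum>n. ys q n 0) = 0" by simp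
  have "(\<lambda>n. zs q n 0) = (\<lambda>n. if n = 0 then 1 else 0)" by (simp add: zs_at0)
  then show "(\<Sum>n. zs q n 0) = 1" using sums_single[of 0 "\<lambda>_. 1::real"] by (simp add: sums_iff)
next
  fix x :: real assume x: "x \<in> {0..<1}"
  define b where "b = (1 + x) / 2"
  have xb: "x < b" "b < 1" "0 \<le> x" using x by (auto simp: b_def)
  have cqb: "continuous_on {0..b} q" by (rule continuous_on_subset[OF q]) (use xb in auto)
  obtain B where B0: "\<forall>y\<in>q ` {0..b}. norm y \<le> B"
    using compact_imp_bounded[OF compact_continuous_image[OF cqb compact_Icc]]
    by (auto simp: bounded_iff)
  then have B: "\<And>y. y \<in> {0..b} \<Longrightarrow> \<bar>q y\<bar> \<le> B" by auto
  define Q where "Q = max 1 B"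
  have Q: "Q \<ge> 1" and qQ: "\<And>y. y \<in> {0..b} \<Longrightarrow> \<bar>q y\<bar> \<le> Q"
    using B by (auto simp: Q_def intro: max.coboundedI2)
  have bnd: "\<forall>t\<in>{0..b}. \<bar>ys q n t\<bar> \<le> Q^n * t^n / fact n \<and> \<bar>zs q n t\<bar> \<le> Q^n * t^n / fact n" for n
    by (rule ys_zs_bound[OF q xb(2) Q qQ])
  have bnd1: "\<bar>ys q n t\<bar> \<le> inverse (fact n) * Q^n" "\<bar>zs q n t\<bar> \<le> inverse (fact n) * Q^n"
    if t: "t \<in> {0..b}" for n t
  proof -
    have "t^n \<le> 1" using t xb by (intro power_le_one) auto
    then have "Q^n * t^n \<le> Q^n" using Q t by (intro mult_right_le_one_le) auto
    then have "inverse (fact n) * (Q^n * t^n) \<le> inverse (fact n) * Q^n" by (intro mult_left_mono) auto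
    moreover have "\<bar>ys q n t\<bar> \<le> Q^n * t^n / fact n" "\<bar>zs q n t\<bar> \<le> Q^n * t^n / fact n"
      using bnd[of n] t by auto
    ultimately show "\<bar>ys q n t\<bar> \<le> inverse (fact n) * Q^n" "\<bar>zs q n t\<bar> \<le> inverse (fact n) * Q^n"
      by (simp_all add: divide_inverse mult.commute, (meson order_trans)+)
  qed
  have sumQ: "summable (\<lambda>n. inverse (fact n) * Q^n)" by (rule summable_exp)
  have sumy: "summable (\<lambda>n. ys q n t)" if "t \<in> {0..b}" for t
    by (rule summable_comparison_test[OF _ sumQ]) (use bnd1[OF that] in auto)
  have sumz: "summable (\<lambda>n. zs q n t)" if "t \<in> {0..b}" for t
    by (rule summable_comparison_test[OF _ sumQ]) (use bnd1[OF that] in auto)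
  have cy: "continuous_on {0..b} (ys q n)" for n
    using ys_deriv[OF q xb(2), of n] by (intro DERIV_continuous_on) auto
  have "\<exists>g. \<forall>t\<in>{0..b}. (\<lambda>n. ys q n t) sums g t \<and> (g has_field_derivative (\<Sum>n. zs q n t)) (at t within {0..b})"
  proof (rule has_field_derivative_series)
    show "convex {0..b}" by simp
    show "\<And>n t. t \<in> {0..b} \<Longrightarrow> (ys q n has_real_derivative zs q n t) (at t within {0..b})"
      using ys_deriv[OF q xb(2)] by auto
    show "uniform_limit {0..b} (\<lambda>n t. \<Sum>i<n. zs q i t) (\<lambda>t. \<Sum>n. zs q n t) sequentially"
      by (rule Weierstrass_m_test[OF _ sumQ]) (use bnd1 in auto)
    show "0 \<in> {0..b}" using xb by auto
    show "summable (\<lambda>n. ys q n 0)" by simp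
  qed
  then obtain g where g: "\<And>t. t \<in> {0..b} \<Longrightarrow> (\<lambda>n. ys q n t) sums g t \<and> (g has_field_derivative (\<Sum>n. zs q n t)) (at t within {0..b})"
    by blast
  have xin: "x \<in> {0..b}" using xb by auto
  have "((\<lambda>t. \<Sum>n. ys q n t) has_real_derivative (\<Sum>n. zs q n x)) (at x within {0..b})"
  proof (rule has_field_derivative_transform_within[where d=1])
    show "(g has_real_derivative (\<Sum>n. zs q n x)) (at x within {0..b})" using g[OF xin] by blast
    show "\<And>t. t \<in> {0..b} \<Longrightarrow> dist t x < 1 \<Longrightarrow> g t = (\<Sum>n. ys q n t)"
      using g by (auto simp: sums_iff)
  qed (use xin in auto)
  then show "((\<lambda>t. \<Sum>n. ys q n t) has_real_derivative (\<Sum>n. zs q n x)) (at x within {0..<1})"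
    by (rule within_transfer) (use xb in auto)
  define f' where "f' = (\<lambda>n t. case n of 0 \<Rightarrow> 0 | Suc m \<Rightarrow> - (q t * ys q m t))"
  define M where "M = (\<lambda>n::nat. case n of 0 \<Rightarrow> 0 | Suc m \<Rightarrow> Q * (inverse (fact m) * Q^m))"
  have sumM: "summable M"
  proof -
    have "summable (\<lambda>m. Q * (inverse (fact m) * Q^m))" by (intro summable_mult sumQ)
    then have "summable (\<lambda>m. M (Suc m))" by (simp add: M_def)
    then show ?thesis by (simp add: summable_Suc_iff)
  qed
  have "\<exists>g. \<forall>t\<in>{0..b}. (\<lambda>n. zs q n t) sums g t \<and> (g has_field_derivative (\<Sum>n. f' n t)) (at t within {0..b})"
  proof (rule has_field_derivative_series)
    show "convex {0..b}" by simp
    show "\<And>n t. t \<in> {0..b} \<Longrightarrow> (zs q n has_real_derivative f' n t) (at t within {0..b})"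
    proof -
      fix n t assume t: "t \<in> {0..b}"
      show "(zs q n has_real_derivative f' n t) (at t within {0..b})"
      proof (cases n)
        case 0
        then show ?thesis by (simp add: f'_def)
      next
        case (Suc m)
        then show ?thesis using zs_Suc_deriv[OF q xb(2) cy t, of m] by (simp add: f'_def)
      qed
    qed
    show "uniform_limit {0..b} (\<lambda>n t. \<Sum>i<n. f' i t) (\<lambda>t. \<Sum>n. f' n t) sequentially"
    proof (rule Weierstrass_m_test[OF _ sumM])
      fix n t assume t: "t \<in> {0..b}"
      show "norm (f' n t) \<le> M n"
      proof (cases n)
        case 0
        then show ?thesis by (simp add: f'_def M_def)
      next
        case (Suc m)
        have "\<bar>q t\<bar> * \<bar>ys q m t\<bar> \<le> Q * (inverse (fact m) * Q^m)"
          using qQ[OF t] bnd1[OF t, of m] by (intro mult_mono) auto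
        then show ?thesis by (simp add: f'_def M_def Suc abs_mult)
      qed
    qed
    show "0 \<in> {0..b}" using xb by auto
    show "summable (\<lambda>n. zs q n 0)" using sumz[of 0] xb by auto
  qed
  then obtain h where h: "\<And>t. t \<in> {0..b} \<Longrightarrow> (\<lambda>n. zs q n t) sums h t \<and> (h has_field_derivative (\<Sum>n. f' n t)) (at t within {0..b})"
    by blast
  have "(\<Sum>n. f' n x) = - q x * (\<Sum>n. ys q n x)"
  proof -
    have "(\<lambda>m. - (q x * ys q m x)) sums (- (q x * (\<Sum>n. ys q n x)))"
      using sumy[OF xin] by (intro sums_minus sums_mult summable_sums)
    then have "(\<lambda>m. f' (Suc m) x) sums (- (q x * (\<Sum>n. ys q n x)))" by (simp add: f'_def)
    then have "(\<lambda>n. f' n x) sums (- (q x * (\<Sum>n. ys q n x)) + f' 0 x)" by (rule sums_Suc)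
    then show ?thesis by (simp add: sums_iff f'_def)
  qed
  moreover have "((\<lambda>t. \<Sum>n. zs q n t) has_real_derivative (\<Sum>n. f' n x)) (at x within {0..b})"
  proof (rule has_field_derivative_transform_within[where d=1])
    show "(h has_real_derivative (\<Sum>n. f' n x)) (at x within {0..b})" using h[OF xin] by blast
    show "\<And>t. t \<in> {0..b} \<Longrightarrow> dist t x < 1 \<Longrightarrow> h t = (\<Sum>n. zs q n t)"
      using h by (auto simp: sums_iff)
  qed (use xin in auto)
  ultimately show "((\<lambda>t. \<Sum>n. zs q n t) has_real_derivative - q x * (\<Sum>n. ys q n x)) (at x within {0..<1})"
    by (intro within_transfer[where b=b]) (use xb in auto)
qed

lemma ode_exists':
  assumes q: "continuous_on {0..<1} q"
  shows "\<exists>y y'. ode_sol q y y'"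
  using ode_exists[OF q] by blast



lemma ray_deriv:
  fixes G :: "complex \<Rightarrow> complex"
  assumes G: "G holomorphic_on ball 0 1" and w: "cmod \<omega> = 1" and s: "\<bar>s\<bar> < 1"
  shows "((\<lambda>s. Re (G (of_real s * \<omega>))) has_real_derivative Re (\<omega> * deriv G (of_real s * \<omega>))) (at s within T)"
proof -
  have inb: "of_real s * \<omega> \<in> ball 0 1" using s w by (simp add: norm_mult)
  have dG: "(G has_field_derivative deriv G (of_real s * \<omega>)) (at (of_real s * \<omega>))"
    using holomorphic_derivI[OF G open_ball inb] .
  have "((\<lambda>z. G (z * \<omega>)) has_field_derivative (deriv G (of_real s * \<omega>) * \<omega>)) (at (of_real s))"
  proof (rule DERIV_chain2[where g="\<lambda>z. z * \<omega>"])
    show "(G has_field_derivative deriv G (of_real s * \<omega>)) (at (of_real s * \<omega>))" by (rule dG)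
    show "((\<lambda>z. z * \<omega>) has_field_derivative \<omega>) (at (of_real s))"
      by (auto intro!: derivative_eq_intros)
  qed
  then have "((\<lambda>x. G (of_real x * \<omega>)) has_vector_derivative (deriv G (of_real s * \<omega>) * \<omega>)) (at s within T)"
    by (rule has_vector_derivative_real_field)
  then have "((\<lambda>x. Re (G (of_real x * \<omega>))) has_real_derivative Re (deriv G (of_real s * \<omega>) * \<omega>)) (at s within T)"
    by (rule has_field_derivative_Re)
  then show ?thesis by (simp add: mult.commute)
qed

lemma re_ofr: "Re (complex_of_real r * X) = r * Re X" by simp

lemma ray_compare:
  fixes M :: "complex \<Rightarrow> complex" and q y y' :: "real \<Rightarrow> real"
  assumes M: "M holomorphic_on ball 0 1"
    and ode: "ode_sol q y y'" and ypos: "\<forall>x\<in>{0<..<1}. y x > 0"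
    and w: "cmod \<omega> = 1"
    and ineq: "\<And>z. z \<in> ball 0 1 - {0} \<Longrightarrow>
        0 \<le> Re (2 * z * deriv M z + z^2 * deriv (deriv M) z) + (Re (z * deriv M z))^2 + (cmod z)^2 * q (cmod z)"
    and t: "0 < t" "t < 1"
  shows "0 \<le> y t + Re (of_real t * \<omega> * deriv M (of_real t * \<omega>)) * y t - t * y' t"
proof -
  define F where "F = (\<lambda>z. z * deriv M z)"
  have M1: "deriv M holomorphic_on ball 0 1" using M by (rule holomorphic_deriv) simp
  have M2: "deriv (deriv M) holomorphic_on ball 0 1" using M1 by (rule holomorphic_deriv) simp
  have F: "F holomorphic_on ball 0 1" unfolding F_def using M M1 by (auto intro!: holomorphic_intros)
  have dF: "deriv F z = deriv M z + z * deriv (deriv M) z" if "z \<in> ball 0 1" for z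
  proof -
    have "(deriv M has_field_derivative deriv (deriv M) z) (at z)"
      using holomorphic_derivI[OF M1 open_ball that] .
    then have "(F has_field_derivative (z * deriv (deriv M) z + 1 * deriv M z)) (at z)"
      unfolding F_def by (intro derivative_eq_intros) auto
    then show ?thesis by (simp add: DERIV_imp_deriv add.commute)
  qed
  define m where "m = (\<lambda>s. Re (M (of_real s * \<omega>)))"
  define dm where "dm = (\<lambda>s. Re (\<omega> * deriv M (of_real s * \<omega>)))"
  define P where "P = (\<lambda>s. Re (F (of_real s * \<omega>)))"
  define dP where "dP = (\<lambda>s. Re (\<omega> * deriv F (of_real s * \<omega>)))"
  define K where "K = (\<lambda>s. y s + P s * y s - s * y' s)"
  define H where "H = (\<lambda>s. exp (m s) * K s)"
  have ode': "y 0 = 0" "\<And>x. x \<in> {0..<1} \<Longrightarrow> (y has_real_derivative y' x) (at x within {0..<1})"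
    "\<And>x. x \<in> {0..<1} \<Longrightarrow> (y' has_real_derivative (- q x * y x)) (at x within {0..<1})"
    using ode by (auto simp: ode_sol_def)
  have dm_d: "(m has_real_derivative dm s) (at s within T)" if "\<bar>s\<bar> < 1" for s T
    unfolding m_def dm_def by (rule ray_deriv[OF M w that])
  have dP_d: "(P has_real_derivative dP s) (at s within T)" if "\<bar>s\<bar> < 1" for s T
    unfolding P_def dP_def by (rule ray_deriv[OF F w that])
  have cy: "continuous_on {0..<1} y" using ode'(2) by (rule DERIV_continuous_on)
  have cy': "continuous_on {0..<1} y'" using ode'(3) by (rule DERIV_continuous_on)
  have cm: "continuous_on {0..t} m"
    by (rule DERIV_continuous_on[OF dm_d]) (use t in auto)
  have cP: "continuous_on {0..t} P"
    by (rule DERIV_continuous_on[OF dP_d]) (use t in auto)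
  have contH: "continuous_on {0..t} H"
  proof -
    have "continuous_on {0..t} y" "continuous_on {0..t} y'"
      using cy cy' t by (auto elim!: continuous_on_subset)
    then show ?thesis unfolding H_def K_def using cm cP by (intro continuous_intros)
  qed
  have H0: "H 0 = 0" by (simp add: H_def K_def ode'(1))
  have "H 0 \<le> H t"
  proof (rule DERIV_nonneg_imp_increasing_open[where f=H and a=0 and b=t])
    show "0 \<le> t" using t by simp
    show "continuous_on {0..t} H" by (rule contH)
    fix s assume s: "0 < s" "s < t"
    have s1: "\<bar>s\<bar> < 1" "s \<in> {0..<1}" using s t by auto
    have atw: "at s within {0<..<1} = at s" by (rule at_within_open) (use s t in auto)
    have dy: "(y has_real_derivative y' s) (at s)"
      using has_field_derivative_subset[OF ode'(2)[OF s1(2)], of "{0<..<1}"] atw by force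
    have dy': "(y' has_real_derivative (- q s * y s)) (at s)"
      using has_field_derivative_subset[OF ode'(3)[OF s1(2)], of "{0<..<1}"] atw by force
    have dPs: "(P has_real_derivative dP s) (at s)" by (rule dP_d[OF s1(1)])
    have dms: "(m has_real_derivative dm s) (at s)" by (rule dm_d[OF s1(1)])
    note dK0 = DERIV_diff[OF DERIV_add[OF dy DERIV_mult[OF dPs dy]] DERIV_mult[OF DERIV_ident dy']]
    have dK: "(K has_real_derivative (dP s * y s + P s * y' s + s * q s * y s)) (at s)"
      unfolding K_def by (rule DERIV_cong[OF dK0]) (simp add: algebra_simps)
    have dH: "(H has_real_derivative (exp (m s) * dm s * K s + exp (m s) * (dP s * y s + P s * y' s + s * q s * y s))) (at s)"
      unfolding H_def by (rule DERIV_cong[OF DERIV_mult[OF DERIV_fun_exp[OF dms] dK]]) (simp add: algebra_simps)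
    define z where "z = of_real s * \<omega>"
    define A where "A = \<omega> * deriv M z"
    define C where "C = \<omega>^2 * deriv (deriv M) z"
    have zb: "z \<in> ball 0 1 - {0}" using s t w by (auto simp: z_def norm_mult)
    have nz: "cmod z = s" using s w by (simp add: z_def norm_mult)
    have e1: "dm s = Re A" by (simp add: dm_def A_def z_def)
    have e2: "P s = s * Re A"
    proof -
      have "F z = of_real s * A" by (simp add: F_def A_def z_def mult.assoc)
      then show ?thesis by (simp add: P_def z_def[symmetric] re_ofr)
    qed
    have e3: "dP s = Re A + s * Re C"
    proof -
      have "\<omega> * deriv F z = A + of_real s * C"
        using dF[OF DiffD1[OF zb]] by (simp add: A_def C_def z_def algebra_simps power2_eq_square)
      then have "Re (\<omega> * deriv F z) = Re A + s * Re C" by (simp only: plus_complex.sel re_ofr)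
      then show ?thesis by (simp only: dP_def z_def)
    qed
    have e4: "Re (2 * z * deriv M z + z^2 * deriv (deriv M) z) = 2 * s * Re A + s^2 * Re C"
    proof -
      have "2 * z * deriv M z + z^2 * deriv (deriv M) z = of_real (2 * s) * A + of_real (s^2) * C"
        by (simp add: A_def C_def z_def algebra_simps power2_eq_square)
      then show ?thesis by (simp only: plus_complex.sel re_ofr)
    qed
    have e5: "Re (z * deriv M z) = s * Re A"
    proof -
      have "z * deriv M z = of_real s * A" by (simp add: A_def z_def algebra_simps)
      then show ?thesis by (simp add: re_ofr)
    qed
    have I: "0 \<le> 2 * s * Re A + s^2 * Re C + (s * Re A)^2 + s^2 * q s"
      using ineq[OF zb] by (simp only: e4 e5 nz)
    have I2: "0 \<le> 2 * Re A + s * Re C + s * (Re A)^2 + s * q s"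
    proof -
      have "2 * s * Re A + s^2 * Re C + (s * Re A)^2 + s^2 * q s = s * (2 * Re A + s * Re C + s * (Re A)^2 + s * q s)"
        by (simp add: algebra_simps power2_eq_square)
      then show ?thesis using I s by (simp add: zero_le_mult_iff)
    qed
    have ys: "y s > 0" using ypos s t by auto
    have eq: "exp (m s) * dm s * K s + exp (m s) * (dP s * y s + P s * y' s + s * q s * y s)
          = exp (m s) * y s * (2 * Re A + s * Re C + s * (Re A)^2 + s * q s)"
      by (simp add: K_def e1 e2 e3 algebra_simps power2_eq_square)
    show "\<exists>D. (H has_real_derivative D) (at s) \<and> 0 \<le> D"
    proof (intro exI conjI)
      show "(H has_real_derivative (exp (m s) * dm s * K s + exp (m s) * (dP s * y s + P s * y' s + s * q s * y s))) (at s)"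
        by (rule dH)
      show "0 \<le> exp (m s) * dm s * K s + exp (m s) * (dP s * y s + P s * y' s + s * q s * y s)"
        unfolding eq using I2 ys by (intro mult_nonneg_nonneg) auto
    qed
  qed
  then have "0 \<le> exp (m t) * K t" using H0 by (simp add: H_def)
  then have "0 \<le> K t" by (simp add: zero_le_mult_iff)
  then show ?thesis by (simp add: K_def P_def F_def)
qed



lemma schwarz_formula:
  fixes f M :: "complex \<Rightarrow> complex"
  assumes M: "M holomorphic_on ball 0 1"
    and df: "\<And>w. w \<in> ball 0 1 - {0} \<Longrightarrow> deriv f w = - exp (-2 * M w) / w^2"
    and z: "z \<in> ball 0 1 - {0}"
  shows "deriv (deriv f) z / deriv f z = -2 * deriv M z - 2 / z"
    and "schwarzian f z = -2 * deriv (deriv M) z - 2 * (deriv M z)^2 - 4 * deriv M z / z"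
proof -
  define B0 where "B0 = ball (0::complex) 1 - {0}"
  have oB0: "open B0" by (simp add: B0_def open_delete)
  have M1: "deriv M holomorphic_on ball 0 1" using M by (rule holomorphic_deriv) simp
  have dM: "(M has_field_derivative deriv M w) (at w)" if "w \<in> B0" for w
    using holomorphic_derivI[OF M open_ball, of w] that by (auto simp: B0_def)
  have dM1: "(deriv M has_field_derivative deriv (deriv M) w) (at w)" if "w \<in> B0" for w
    using holomorphic_derivI[OF M1 open_ball, of w] that by (auto simp: B0_def)
  define D2 where "D2 = (\<lambda>w. exp (-2 * M w) * (2 * deriv M w / w^2 + 2 / w^3))"
  have dd: "deriv (deriv f) w = D2 w" if w: "w \<in> B0" for w
  proof -
    have w0: "w \<noteq> 0" using w by (auto simp: B0_def)
    have "((\<lambda>w. - exp (-2 * M w) / w^2) has_field_derivative D2 w) (at w)"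
    proof (rule DERIV_cong)
      show "((\<lambda>w. - exp (-2 * M w) / w^2) has_field_derivative
          ((- (exp (-2 * M w) * (-2 * deriv M w))) * w^2 - (- exp (-2 * M w)) * (2 * w)) / (w^2 * w^2)) (at w)"
        using dM[OF w] w0 by (auto intro!: derivative_eq_intros simp: power2_eq_square divide_simps)
      show "((- (exp (-2 * M w) * (-2 * deriv M w))) * w^2 - (- exp (-2 * M w)) * (2 * w)) / (w^2 * w^2) = D2 w"
        using w0 by (simp add: D2_def field_simps power2_eq_square power3_eq_cube)
    qed
    then have "(deriv f has_field_derivative D2 w) (at w)"
      by (rule has_field_derivative_transform_within_open[OF _ oB0 w]) (simp add: df B0_def)
    then show ?thesis by (rule DERIV_imp_deriv)
  qed
  have R: "deriv (deriv f) w / deriv f w = -2 * deriv M w - 2 / w" if w: "w \<in> B0" for w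
  proof -
    have w0: "w \<noteq> 0" using w by (auto simp: B0_def)
    have "exp (-2 * M w) \<noteq> 0" by simp
    then show ?thesis using w0 w
      by (simp add: dd df B0_def D2_def field_simps power2_eq_square power3_eq_cube)
  qed
  have zB: "z \<in> B0" using z by (simp add: B0_def)
  then show "deriv (deriv f) z / deriv f z = -2 * deriv M z - 2 / z" by (rule R)
  have z0: "z \<noteq> 0" using z by auto
  have "((\<lambda>w. -2 * deriv M w - 2 / w) has_field_derivative (-2 * deriv (deriv M) z + 2 / z^2)) (at z)"
  proof (rule DERIV_cong)
    show "((\<lambda>w. -2 * deriv M w - 2 / w) has_field_derivative (-2 * deriv (deriv M) z - (- (2 * 1) / (z * z)))) (at z)"
      using dM1[OF zB] z0 by (auto intro!: derivative_eq_intros)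
    show "-2 * deriv (deriv M) z - (- (2 * 1) / (z * z)) = -2 * deriv (deriv M) z + 2 / z^2"
      by (simp add: power2_eq_square)
  qed
  then have "((\<lambda>w. deriv (deriv f) w / deriv f w) has_field_derivative (-2 * deriv (deriv M) z + 2 / z^2)) (at z)"
    by (rule has_field_derivative_transform_within_open[OF _ oB0 zB]) (simp add: R)
  then have dR: "deriv (\<lambda>w. deriv (deriv f) w / deriv f w) z = -2 * deriv (deriv M) z + 2 / z^2"
    by (rule DERIV_imp_deriv)
  show "schwarzian f z = -2 * deriv (deriv M) z - 2 * (deriv M z)^2 - 4 * deriv M z / z"
    unfolding schwarzian_def dR R[OF zB] using z0
    by (simp add: field_simps power2_eq_square)
qed

lemma get_M:
  fixes f :: "complex \<Rightarrow> complex"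
  assumes B: "classB f" and lu: "loc_univalent f"
  obtains M where "M holomorphic_on ball 0 1"
    "\<And>w. w \<in> ball 0 1 - {0} \<Longrightarrow> deriv f w = - exp (-2 * M w) / w^2"
proof -
  obtain g where g: "g holomorphic_on ball 0 1" and fg: "\<And>z. z \<in> ball 0 1 - {0} \<Longrightarrow> f z = 1 / z + g z"
    using B by (auto simp: classB_def)
  define B0 where "B0 = ball (0::complex) 1 - {0}"
  have oB0: "open B0" by (simp add: B0_def open_delete)
  have dfw: "deriv f w = -1 / w^2 + deriv g w" if w: "w \<in> B0" for w
  proof -
    have w0: "w \<noteq> 0" using w by (auto simp: B0_def)
    have dg: "(g has_field_derivative deriv g w) (at w)"
      using holomorphic_derivI[OF g open_ball, of w] w by (auto simp: B0_def)
    have "((\<lambda>w. 1 / w + g w) has_field_derivative (-1 / w^2 + deriv g w)) (at w)"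
    proof (rule DERIV_cong)
      show "((\<lambda>w. 1 / w + g w) has_field_derivative (- (1 / w^2) + deriv g w)) (at w)"
        using dg w0 by (intro derivative_eq_intros) (auto simp: power2_eq_square)
    qed simp
    then have "(f has_field_derivative (-1 / w^2 + deriv g w)) (at w)"
      by (rule has_field_derivative_transform_within_open[OF _ oB0 w]) (simp add: fg B0_def)
    then show ?thesis by (rule DERIV_imp_deriv)
  qed
  define h where "h = (\<lambda>w. 1 - w^2 * deriv g w)"
  have g1: "deriv g holomorphic_on ball 0 1" using g by (rule holomorphic_deriv) simp
  have hh: "h holomorphic_on ball 0 1" unfolding h_def using g g1 by (auto intro!: holomorphic_intros)
  have hw: "h w = - (w^2) * deriv f w" if "w \<in> B0" for w
    using that by (auto simp: h_def dfw B0_def field_simps)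
  have hnz: "h w \<noteq> 0" if "w \<in> ball 0 1" for w
  proof (cases "w = 0")
    case True then show ?thesis by (simp add: h_def)
  next
    case False
    then have "w \<in> B0" using that by (simp add: B0_def)
    then show ?thesis using lu False by (simp add: hw loc_univalent_def B0_def)
  qed
  obtain L where L: "L holomorphic_on ball 0 1" and hL: "\<And>z. z \<in> ball 0 1 \<Longrightarrow> h z = exp (L z)"
    using contractible_imp_holomorphic_log[OF hh convex_imp_contractible[OF convex_ball] hnz] by blast
  define M where "M = (\<lambda>w. - (L w - L 0) / 2)"
  have MH: "M holomorphic_on ball 0 1" unfolding M_def using L by (auto intro!: holomorphic_intros)
  have eM: "exp (-2 * M w) = h w" if "w \<in> ball 0 1" for w
  proof -
    have "-2 * M w = L w - L 0" by (simp add: M_def)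
    then have "exp (-2 * M w) = exp (L w) / exp (L 0)" by (simp add: exp_diff)
    also have "\<dots> = h w / h 0" using hL[OF that] hL[of 0] by simp
    also have "h 0 = 1" by (simp add: h_def)
    finally show ?thesis by simp
  qed
  show ?thesis
  proof (rule that[OF MH])
    fix w :: complex assume w: "w \<in> ball 0 1 - {0}"
    then have wB: "w \<in> B0" by (simp add: B0_def)
    have e: "exp (-2 * M w) = 1 - w^2 * deriv g w" using eM[of w] w by (simp add: h_def)
    show "deriv f w = - exp (-2 * M w) / w^2"
      unfolding dfw[OF wB] e using w by (simp add: field_simps)
  qed
qed



lemma part1:
  fixes \<alpha> :: real and q :: "real \<Rightarrow> real" and f :: "complex \<Rightarrow> complex"
  assumes P: "classP ((1 + \<alpha>) / 2) q" and B: "classB f" and lu: "loc_univalent f"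
    and S: "\<forall>z\<in>ball 0 1 - {0}. cmod (schwarzian f z) \<le> 2 * q (cmod z)"
    and \<alpha>: "0 \<le> \<alpha>"
  shows "classBC \<alpha> f"
proof -
  obtain M where M: "M holomorphic_on ball 0 1"
    and df: "\<And>w. w \<in> ball 0 1 - {0} \<Longrightarrow> deriv f w = - exp (-2 * M w) / w^2"
    using get_M[OF B lu] by blast
  have cq: "continuous_on {0..<1} q" using P by (simp add: classP_def)
  obtain y y' where ode: "ode_sol q y y'" using ode_exists'[OF cq] by blast
  have ypos: "\<forall>x\<in>{0<..<1}. y x > 0"
    and "\<exists>L. ((\<lambda>x. ereal (y' x / y x)) \<longlongrightarrow> L) (at_left 1) \<and> L \<ge> ereal ((1 + \<alpha>) / 2)"
    using P ode unfolding classP_def by blast+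
  then obtain L where Llim: "((\<lambda>x. ereal (y' x / y x)) \<longlongrightarrow> L) (at_left 1)"
    and Lge: "L \<ge> ereal ((1 + \<alpha>) / 2)" by blast
  have ineq: "0 \<le> Re (2 * z * deriv M z + z^2 * deriv (deriv M) z) + (Re (z * deriv M z))^2 + (cmod z)^2 * q (cmod z)"
    if z: "z \<in> ball 0 1 - {0}" for z
  proof -
    define a where "a = z * deriv M z"
    define b where "b = z^2 * deriv (deriv M) z"
    have z0: "z \<noteq> 0" using z by auto
    have Sz: "schwarzian f z = -2 * deriv (deriv M) z - 2 * (deriv M z)^2 - 4 * deriv M z / z"
      by (rule schwarz_formula(2)[OF M df z])
    have e: "2 * z * deriv M z + z^2 * deriv (deriv M) z = - (z^2 * schwarzian f z) / 2 - a^2"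
      unfolding Sz a_def using z0 by (simp add: field_simps power2_eq_square)
    have r1: "- Re (z^2 * schwarzian f z) \<ge> - ((cmod z)^2 * (2 * q (cmod z)))"
    proof -
      have "Re (z^2 * schwarzian f z) \<le> cmod (z^2 * schwarzian f z)" by (rule complex_Re_le_cmod)
      also have "\<dots> = (cmod z)^2 * cmod (schwarzian f z)" by (simp add: norm_mult norm_power)
      also have "\<dots> \<le> (cmod z)^2 * (2 * q (cmod z))" using S z by (intro mult_left_mono) auto
      finally show ?thesis by simp
    qed
    have r2: "Re (a^2) \<le> (Re a)^2" by (simp add: power2_eq_square)
    have "Re (2 * z * deriv M z + z^2 * deriv (deriv M) z) = - Re (z^2 * schwarzian f z) / 2 - Re (a^2)"
      unfolding e by (simp add: field_simps)
    then show ?thesis using r1 r2 unfolding a_def[symmetric] by (simp add: algebra_simps)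
  qed
  define F where "F = (\<lambda>z. z * deriv M z)"
  have M1: "deriv M holomorphic_on ball 0 1" using M by (rule holomorphic_deriv) simp
  have FH: "F holomorphic_on ball 0 1" unfolding F_def using M M1 by (auto intro!: holomorphic_intros)
  have key: "Re (F z0) \<ge> (\<alpha> - 1) / 2" if z0: "z0 \<in> ball 0 1" for z0
  proof -
    have bound: "Re (F z0) + 1 \<ge> r * (y' r / y r)" if r: "cmod z0 < r" "r < 1" for r
    proof -
      have r0: "0 < r" using r by (meson le_less_trans norm_ge_zero)
      have yr: "y r > 0" using ypos r r0 by auto
      have "Re (- F z0) \<le> 1 - r * (y' r / y r)"
      proof (rule maximum_real_frontier[where S="ball 0 r" and f="\<lambda>z. - F z" and \<xi>=z0])
        show "(\<lambda>z. - F z) holomorphic_on interior (ball 0 r)"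
          using FH r by (auto intro!: holomorphic_intros elim!: holomorphic_on_subset)
        show "continuous_on (closure (ball 0 r)) (\<lambda>z. - F z)"
          using holomorphic_on_imp_continuous_on[OF FH] r r0
          by (auto intro!: continuous_intros elim!: continuous_on_subset)
        show "bounded (ball (0::complex) r)" by simp
        show "z0 \<in> ball 0 r" using r by simp
        fix z :: complex assume "z \<in> frontier (ball 0 r)"
        then have zr: "cmod z = r" using r0 by (simp add: frontier_ball)
        define \<omega> where "\<omega> = z / of_real r"
        have w: "cmod \<omega> = 1" using zr r0 by (simp add: \<omega>_def norm_divide)
        have zw: "of_real r * \<omega> = z" using r0 by (simp add: \<omega>_def)
        have "0 \<le> y r + Re (of_real r * \<omega> * deriv M (of_real r * \<omega>)) * y r - r * y' r"
          by (rule ray_compare[OF M ode ypos w ineq]) (use r0 r in auto)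
        then have "0 \<le> y r + Re (F z) * y r - r * y' r" by (simp add: zw F_def)
        then have "r * y' r - y r \<le> Re (F z) * y r" by simp
        then have "(r * y' r - y r) / y r \<le> Re (F z)" using yr by (simp add: divide_le_eq)
        then show "Re (- F z) \<le> 1 - r * (y' r / y r)" using yr by (simp add: diff_divide_distrib)
      qed
      then show ?thesis by simp
    qed
    define c where "c = Re (F z0) + 1"
    define \<gamma> where "\<gamma> = (1 + \<alpha>) / 2"
    show ?thesis
    proof (rule ccontr)
      assume "\<not> ?thesis"
      then have c\<gamma>: "c < \<gamma>" by (simp add: c_def \<gamma>_def field_simps)
      have \<gamma>0: "\<gamma> > 0" using \<alpha> by (simp add: \<gamma>_def)
      define d where "d = (max c 0 + \<gamma>) / 2"
      have d: "0 < d" "d < \<gamma>" "c < d" using c\<gamma> \<gamma>0 by (auto simp: d_def)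
      have ev1: "eventually (\<lambda>r. ereal d < ereal (y' r / y r)) (at_left 1)"
      proof (rule order_tendstoD(1)[OF Llim])
        have "ereal d < ereal \<gamma>" using d by simp
        then show "ereal d < L" using Lge unfolding \<gamma>_def by (rule less_le_trans)
      qed
      define b where "b = max (cmod z0) (max (c / d) 0)"
      have b1: "b < 1" using z0 d c\<gamma> by (auto simp: b_def divide_less_eq \<gamma>_def)
      have ev2: "eventually (\<lambda>r. b < r \<and> r < 1) (at_left (1::real))"
        using eventually_at_left_real[OF b1] by simp
      obtain r where rr: "d < y' r / y r" "b < r" "r < 1"
        using eventually_happens'[OF trivial_limit_at_left_real eventually_conj[OF ev1 ev2]] by auto
      have r0: "0 < r" "cmod z0 < r" "c / d < r" using rr by (auto simp: b_def)
      have "c \<ge> r * (y' r / y r)" using bound[OF r0(2) rr(3)] by (simp add: c_def)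
      moreover have "r * (y' r / y r) > r * d" using rr r0 by (intro mult_strict_left_mono) auto
      moreover have "r * d > c" using r0(3) d by (simp add: divide_less_eq mult.commute)
      ultimately show False by linarith
    qed
  qed
  show ?thesis
    unfolding classBC_def
  proof (intro conjI B lu ballI)
    fix z :: complex assume z: "z \<in> ball 0 1 - {0}"
    have "1 + z * deriv (deriv f) z / deriv f z = 1 + z * (deriv (deriv f) z / deriv f z)" by simp
    also have "\<dots> = 1 + z * (-2 * deriv M z - 2 / z)" by (simp only: schwarz_formula(1)[OF M df z])
    also have "\<dots> = -1 - 2 * F z" using z by (simp add: F_def field_simps)
    finally have "Re (1 + z * deriv (deriv f) z / deriv f z) = Re (-1 - 2 * F z)" by (rule arg_cong)
    also have "\<dots> = -1 - 2 * Re (F z)" by simp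
    finally have "Re (1 + z * deriv (deriv f) z / deriv f z) = -1 - 2 * Re (F z)" .
    then show "Re (1 + z * deriv (deriv f) z / deriv f z) \<le> - \<alpha>" using key[of z] z by auto
  qed
qed



lemma choose_s:
  fixes m :: real
  assumes m: "0 \<le> m" "m < 1"
  obtains s where "0 < s" "s \<le> pi/2" "s * cos s / sin s = m"
proof -
  define a where "a = arccos m"
  have a0: "0 < a" using arccos_less_arccos[of m 1] m by (simp add: a_def)
  have a1: "a \<le> pi/2" using arccos_le_pi2[of m] m by (simp add: a_def)
  have ca: "cos a = m" using m by (simp add: a_def)
  have sa: "0 < sin a" using a0 a1 by (intro sin_gt_zero) auto
  have "sin a \<le> a" using a0 by (intro sin_x_le_x) auto
  then have "m * sin a \<le> m * a" using m by (intro mult_left_mono) auto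
  then have "m \<le> a * cos a / sin a" using sa ca m by (simp add: le_divide_eq mult.commute)
  moreover have "(pi/2) * cos (pi/2) / sin (pi/2) \<le> m" using m by simp
  moreover have "continuous_on {a..pi/2} (\<lambda>x. x * cos x / sin x)"
  proof (intro continuous_intros ballI)
    fix x assume "x \<in> {a..pi/2}"
    then have "0 < x" "x < pi" using a0 by auto
    then show "sin x \<noteq> 0" using sin_gt_zero by force
  qed
  ultimately obtain s where s: "a \<le> s" "s \<le> pi/2" "s * cos s / sin s = m"
    using IVT2'[where f="\<lambda>x. x * cos x / sin x" and a=a and b="pi/2" and y=m] a1 by auto
  show ?thesis
  proof (rule that)
    show "0 < s" using s(1) a0 by linarith
  qed (use s in auto)
qed

lemma classP_const:
  fixes s \<beta> :: real
  assumes s: "0 < s" "s \<le> pi/2" and \<beta>: "\<beta> \<le> s * cos s / sin s"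
  shows "classP \<beta> (\<lambda>_. s^2)"
  unfolding classP_def
proof (intro conjI allI impI ballI)
  show "continuous_on {0..<1} (\<lambda>_. s^2)" by simp
  show "\<And>r. 0 \<le> s^2" by simp
  fix y y' assume ode: "ode_sol (\<lambda>_. s^2) y y'"
  have o: "y 0 = 0" "y' 0 = 1"
    "\<And>x. x \<in> {0..<1} \<Longrightarrow> (y has_real_derivative y' x) (at x within {0..<1})"
    "\<And>x. x \<in> {0..<1} \<Longrightarrow> (y' has_real_derivative (- (s^2) * y x)) (at x within {0..<1})"
    using ode by (auto simp: ode_sol_def)
  define E where "E = (\<lambda>x. (y' x - cos (s * x)) * (y' x - cos (s * x)) + s^2 * ((y x - sin (s * x) / s) * (y x - sin (s * x) / s)))"
  have "\<exists>c. \<forall>x\<in>{0..<1}. E x = c"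
  proof (rule has_field_derivative_zero_constant)
    show "convex {0..<1::real}" by simp
    fix x :: real assume x: "x \<in> {0..<1}"
    have dc: "((\<lambda>x. cos (s * x)) has_real_derivative (- sin (s * x) * s)) (at x within {0..<1})"
      by (auto intro!: derivative_eq_intros)
    have ds: "((\<lambda>x. sin (s * x) / s) has_real_derivative (cos (s * x))) (at x within {0..<1})"
      using s by (auto intro!: derivative_eq_intros)
    note de = DERIV_diff[OF o(4)[OF x] dc]
    note dd = DERIV_diff[OF o(3)[OF x] ds]
    note dE = DERIV_add[OF DERIV_mult[OF de de] DERIV_cmult[OF DERIV_mult[OF dd dd], of "s^2"]]
    show "(E has_real_derivative 0) (at x within {0..<1})"
      unfolding E_def by (rule DERIV_cong[OF dE]) (use s in \<open>simp add: field_simps power2_eq_square\<close>)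
  qed
  then obtain c where c: "\<And>x. x \<in> {0..<1} \<Longrightarrow> E x = c" by blast
  have "E 0 = 0" by (simp add: E_def o)
  then have E0: "\<And>x. x \<in> {0..<1} \<Longrightarrow> E x = 0" using c[of 0] c by auto
  have sol: "y x = sin (s * x) / s \<and> y' x = cos (s * x)" if x: "x \<in> {0..<1}" for x
  proof -
    have "(y' x - cos (s * x))^2 + s^2 * (y x - sin (s * x) / s)^2 = 0" using E0[OF x] by (simp add: E_def power2_eq_square)
    moreover have "0 \<le> (y' x - cos (s * x))^2" "0 \<le> s^2 * (y x - sin (s * x) / s)^2" by auto
    ultimately have "(y' x - cos (s * x))^2 = 0" "s^2 * (y x - sin (s * x) / s)^2 = 0" by linarith+
    then show ?thesis using s by auto
  qed
  have ypos: "y x > 0" if x: "x \<in> {0<..<1}" for x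
  proof -
    have "0 < s * x" "s * x < pi" using x s by (auto simp: mult_less_cancel_left) (smt (verit, ccfv_SIG) mult_le_cancel_left1 pi_gt3)
    then have "sin (s * x) > 0" by (rule sin_gt_zero)
    then show ?thesis using sol[of x] x s by auto
  qed
  then show "\<And>x. x \<in> {0<..<1} \<Longrightarrow> 0 < y x" by blast
  define m where "m = s * cos s / sin s"
  have sin1: "sin s \<noteq> 0" using s sin_gt_zero[of s] pi_gt3 by auto
  have "((\<lambda>x. s * cos (s * x) / sin (s * x)) \<longlongrightarrow> s * cos (s * 1) / sin (s * 1)) (at_left 1)"
    using sin1 by (intro tendsto_intros) auto
  then have lim0: "((\<lambda>x. s * cos (s * x) / sin (s * x)) \<longlongrightarrow> m) (at_left 1)" by (simp add: m_def)
  have ev: "eventually (\<lambda>x. s * cos (s * x) / sin (s * x) = y' x / y x) (at_left (1::real))"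
  proof -
    have "eventually (\<lambda>x. x \<in> {0<..<1}) (at_left (1::real))" by (rule eventually_at_left_real) simp
    then show ?thesis
    proof (rule eventually_mono)
      fix x :: real assume x: "x \<in> {0<..<1}"
      then show "s * cos (s * x) / sin (s * x) = y' x / y x" using sol[of x] s by auto
    qed
  qed
  have "((\<lambda>x. y' x / y x) \<longlongrightarrow> m) (at_left 1)" by (rule tendsto_cong[THEN iffD1, OF ev lim0])
  then have "((\<lambda>x. ereal (y' x / y x)) \<longlongrightarrow> ereal m) (at_left 1)" by simp
  moreover have "ereal m \<ge> ereal \<beta>" using \<beta> by (simp add: m_def)
  ultimately show "\<exists>L. ((\<lambda>x. ereal (y' x / y x)) \<longlongrightarrow> L) (at_left 1) \<and> ereal \<beta> \<le> L" by blast
qed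



lemma sin_nz:
  fixes s :: real and z :: complex
  assumes s: "0 < s" "s \<le> pi/2" and z: "z \<in> ball 0 1 - {0}"
  shows "sin (of_real s * z) \<noteq> 0"
proof
  assume "sin (of_real s * z) = 0"
  then obtain n :: int where n: "of_real s * z = of_real (n * pi)" by (auto simp: sin_eq_0)
  have z0: "z \<noteq> 0" and z1: "cmod z < 1" using z by auto
  have "n \<noteq> 0" using n z0 s by auto
  then have "1 \<le> \<bar>real_of_int n\<bar>" by linarith
  then have "pi \<le> \<bar>real_of_int n\<bar> * pi" by simp
  also have "\<dots> = cmod (of_real (n * pi) :: complex)" by (simp only: norm_of_real abs_mult) simp
  also have "\<dots> = cmod (of_real s * z)" using n by simp
  also have "\<dots> = s * cmod z" using s by (simp add: norm_mult)
  also have "\<dots> < s" using s z1 by simp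
  finally show False using s pi_gt3 by linarith
qed

lemma cot_classB:
  fixes s :: real
  assumes s: "0 < s" "s \<le> pi/2"
  shows "classB (\<lambda>z. of_real s * cos (of_real s * z) / sin (of_real s * z))"
proof -
  define \<sigma> where "\<sigma> = complex_of_real s"
  have \<sigma>0: "\<sigma> \<noteq> 0" using s by (simp add: \<sigma>_def)
  define N where "N = (\<lambda>z. \<sigma> * z * cos (\<sigma> * z) - sin (\<sigma> * z))"
  have NH: "N holomorphic_on UNIV" unfolding N_def by (intro holomorphic_intros)
  have N0: "N 0 = 0" by (simp add: N_def)
  have "(N has_field_derivative (\<sigma> * 1 * cos (\<sigma> * 0) + \<sigma> * 0 * (- sin (\<sigma> * 0) * (\<sigma> * 1)) - cos (\<sigma> * 0) * (\<sigma> * 1))) (at 0)"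
    unfolding N_def by (intro derivative_eq_intros) auto
  then have dN0: "deriv N 0 = 0" by (simp add: DERIV_imp_deriv)
  define N1 where "N1 = (\<lambda>z. if z = 0 then deriv N 0 else (N z - N 0) / (z - 0))"
  have N1H: "N1 holomorphic_on UNIV" unfolding N1_def by (rule pole_lemma_open[OF NH]) simp
  have N10: "N1 0 = 0" by (simp add: N1_def dN0)
  define N2 where "N2 = (\<lambda>z. if z = 0 then deriv N1 0 else (N1 z - N1 0) / (z - 0))"
  have N2H: "N2 holomorphic_on UNIV" unfolding N2_def by (rule pole_lemma_open[OF N1H]) simp
  have N2z: "N2 z = N z / z / z" if "z \<noteq> 0" for z using that by (simp add: N2_def N10 N1_def N0 dN0)
  define Sn where "Sn = (\<lambda>z. sin (\<sigma> * z))"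
  have SnH: "Sn holomorphic_on UNIV" unfolding Sn_def by (intro holomorphic_intros)
  define D where "D = (\<lambda>z. if z = 0 then deriv Sn 0 else (Sn z - Sn 0) / (z - 0))"
  have DH: "D holomorphic_on UNIV" unfolding D_def by (rule pole_lemma_open[OF SnH]) simp
  have "(Sn has_field_derivative (cos (\<sigma> * 0) * (\<sigma> * 1))) (at 0)"
    unfolding Sn_def by (intro derivative_eq_intros) auto
  then have D0: "D 0 = \<sigma>" by (simp add: D_def DERIV_imp_deriv)
  have Dz: "D z = sin (\<sigma> * z) / z" if "z \<noteq> 0" for z using that by (simp add: D_def Sn_def)
  have Dnz: "D z \<noteq> 0" if "z \<in> ball 0 1" for z
  proof (cases "z = 0")
    case True then show ?thesis using D0 \<sigma>0 by simp
  next
    case False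
    then have "sin (\<sigma> * z) \<noteq> 0" using sin_nz[OF s, of z] that by (simp add: \<sigma>_def)
    then show ?thesis using False by (simp add: Dz)
  qed
  define g where "g = (\<lambda>z. N2 z / D z)"
  have gH: "g holomorphic_on ball 0 1" unfolding g_def
    using N2H DH Dnz by (intro holomorphic_on_divide) (auto elim: holomorphic_on_subset)
  show ?thesis unfolding classB_def
  proof (intro exI conjI ballI)
    show "g holomorphic_on ball 0 1" by (rule gH)
    fix z :: complex assume z: "z \<in> ball 0 1 - {0}"
    have z0: "z \<noteq> 0" using z by auto
    have sz: "sin (\<sigma> * z) \<noteq> 0" using sin_nz[OF s z] by (simp add: \<sigma>_def)
    have "g z = (\<sigma> * z * cos (\<sigma> * z) - sin (\<sigma> * z)) / (z * sin (\<sigma> * z))"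
      using z0 sz by (simp add: g_def N2z Dz N_def field_simps)
    also have "\<dots> = \<sigma> * cos (\<sigma> * z) / sin (\<sigma> * z) - 1 / z"
      using z0 sz by (simp add: field_simps)
    finally show "of_real s * cos (of_real s * z) / sin (of_real s * z) = 1 / z + g z"
      by (simp add: \<sigma>_def)
  qed
qed



lemma cot_facts:
  fixes s :: real
  assumes s: "0 < s" "s \<le> pi/2" and z: "z \<in> ball 0 1 - {0}"
  defines "f \<equiv> (\<lambda>z. of_real s * cos (of_real s * z) / sin (of_real s * z))"
  shows "deriv f z = - ((of_real s)^2) / (sin (of_real s * z))^2"
    and "deriv (deriv f) z / deriv f z = -2 * of_real s * cos (of_real s * z) / sin (of_real s * z)"
    and "schwarzian f z = 2 * (of_real s)^2"
proof -
  define \<sigma> where "\<sigma> = complex_of_real s"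
  define B0 where "B0 = ball (0::complex) 1 - {0}"
  have oB0: "open B0" by (simp add: B0_def open_delete)
  have snz: "sin (\<sigma> * w) \<noteq> 0" if "w \<in> B0" for w using sin_nz[OF s, of w] that by (simp add: B0_def \<sigma>_def)
  have sc: "(sin (\<sigma> * w))^2 + (cos (\<sigma> * w))^2 = 1" for w by simp
  have fdef: "f = (\<lambda>z. \<sigma> * cos (\<sigma> * z) / sin (\<sigma> * z))" by (simp add: f_def \<sigma>_def)
  have d1: "deriv f w = - (\<sigma>^2) / (sin (\<sigma> * w))^2" if w: "w \<in> B0" for w
  proof -
    have "(f has_field_derivative - (\<sigma>^2) / (sin (\<sigma> * w))^2) (at w)"
    proof (rule DERIV_cong)
      show "(f has_field_derivative
          ((\<sigma> * (- sin (\<sigma> * w) * (\<sigma> * 1))) * sin (\<sigma> * w) - \<sigma> * cos (\<sigma> * w) * (cos (\<sigma> * w) * (\<sigma> * 1))) / (sin (\<sigma> * w) * sin (\<sigma> * w))) (at w)"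
        unfolding fdef using snz[OF w] by (intro derivative_eq_intros) auto
      show "((\<sigma> * (- sin (\<sigma> * w) * (\<sigma> * 1))) * sin (\<sigma> * w) - \<sigma> * cos (\<sigma> * w) * (cos (\<sigma> * w) * (\<sigma> * 1))) / (sin (\<sigma> * w) * sin (\<sigma> * w))
          = - (\<sigma>^2) / (sin (\<sigma> * w))^2"
      proof -
        have num: "(\<sigma> * (- sin (\<sigma> * w) * (\<sigma> * 1))) * sin (\<sigma> * w) - \<sigma> * cos (\<sigma> * w) * (cos (\<sigma> * w) * (\<sigma> * 1))
            = - (\<sigma>^2) * ((sin (\<sigma> * w))^2 + (cos (\<sigma> * w))^2)"
          by (simp add: algebra_simps power2_eq_square del: sin_cos_squared_add sin_cos_squared_add2 sin_cos_squared_add3)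
        show ?thesis unfolding num sc by (simp add: power2_eq_square)
      qed
    qed
    then show ?thesis by (rule DERIV_imp_deriv)
  qed
  have d2: "deriv (deriv f) w = 2 * \<sigma>^3 * cos (\<sigma> * w) / (sin (\<sigma> * w))^3" if w: "w \<in> B0" for w
  proof -
    have "((\<lambda>w. - (\<sigma>^2) / (sin (\<sigma> * w))^2) has_field_derivative 2 * \<sigma>^3 * cos (\<sigma> * w) / (sin (\<sigma> * w))^3) (at w)"
    proof (rule DERIV_cong)
      show "((\<lambda>w. - (\<sigma>^2) / (sin (\<sigma> * w))^2) has_field_derivative
          - (- (\<sigma>^2) * (of_nat 2 * (sin (\<sigma> * w))^(2-1) * (cos (\<sigma> * w) * (\<sigma> * 1)))) / ((sin (\<sigma> * w))^2 * (sin (\<sigma> * w))^2)) (at w)"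
        using snz[OF w] by (intro derivative_eq_intros) (auto simp: field_simps)
      show "- (- (\<sigma>^2) * (of_nat 2 * (sin (\<sigma> * w))^(2-1) * (cos (\<sigma> * w) * (\<sigma> * 1)))) / ((sin (\<sigma> * w))^2 * (sin (\<sigma> * w))^2)
           = 2 * \<sigma>^3 * cos (\<sigma> * w) / (sin (\<sigma> * w))^3"
        using snz[OF w] by (simp add: field_simps power2_eq_square power3_eq_cube)
    qed
    then have "(deriv f has_field_derivative 2 * \<sigma>^3 * cos (\<sigma> * w) / (sin (\<sigma> * w))^3) (at w)"
      by (rule has_field_derivative_transform_within_open[OF _ oB0 w]) (simp add: d1)
    then show ?thesis by (rule DERIV_imp_deriv)
  qed
  have R: "deriv (deriv f) w / deriv f w = -2 * \<sigma> * cos (\<sigma> * w) / sin (\<sigma> * w)" if w: "w \<in> B0" for w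
    using snz[OF w] \<sigma>_def s by (simp add: d1[OF w] d2[OF w] field_simps power2_eq_square power3_eq_cube)
  have zB: "z \<in> B0" using z by (simp add: B0_def)
  show "deriv f z = - ((of_real s)^2) / (sin (of_real s * z))^2" using d1[OF zB] by (simp add: \<sigma>_def)
  show "deriv (deriv f) z / deriv f z = -2 * of_real s * cos (of_real s * z) / sin (of_real s * z)"
    using R[OF zB] by (simp add: \<sigma>_def)
  have "((\<lambda>w. -2 * \<sigma> * cos (\<sigma> * w) / sin (\<sigma> * w)) has_field_derivative 2 * \<sigma>^2 / (sin (\<sigma> * z))^2) (at z)"
  proof (rule DERIV_cong)
    show "((\<lambda>w. -2 * \<sigma> * cos (\<sigma> * w) / sin (\<sigma> * w)) has_field_derivative
        ((-2 * \<sigma> * (- sin (\<sigma> * z) * (\<sigma> * 1))) * sin (\<sigma> * z) - -2 * \<sigma> * cos (\<sigma> * z) * (cos (\<sigma> * z) * (\<sigma> * 1))) / (sin (\<sigma> * z) * sin (\<sigma> * z))) (at z)"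
      using snz[OF zB] by (intro derivative_eq_intros) auto
    show "((-2 * \<sigma> * (- sin (\<sigma> * z) * (\<sigma> * 1))) * sin (\<sigma> * z) - -2 * \<sigma> * cos (\<sigma> * z) * (cos (\<sigma> * z) * (\<sigma> * 1))) / (sin (\<sigma> * z) * sin (\<sigma> * z))
        = 2 * \<sigma>^2 / (sin (\<sigma> * z))^2"
    proof -
      have num: "(-2 * \<sigma> * (- sin (\<sigma> * z) * (\<sigma> * 1))) * sin (\<sigma> * z) - -2 * \<sigma> * cos (\<sigma> * z) * (cos (\<sigma> * z) * (\<sigma> * 1))
          = 2 * \<sigma>^2 * ((sin (\<sigma> * z))^2 + (cos (\<sigma> * z))^2)"
        by (simp add: algebra_simps power2_eq_square del: sin_cos_squared_add sin_cos_squared_add2 sin_cos_squared_add3)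
      show ?thesis unfolding num sc by (simp add: power2_eq_square)
    qed
  qed
  then have "((\<lambda>w. deriv (deriv f) w / deriv f w) has_field_derivative 2 * \<sigma>^2 / (sin (\<sigma> * z))^2) (at z)"
    by (rule has_field_derivative_transform_within_open[OF _ oB0 zB]) (simp add: R)
  then have dR: "deriv (\<lambda>w. deriv (deriv f) w / deriv f w) z = 2 * \<sigma>^2 / (sin (\<sigma> * z))^2"
    by (rule DERIV_imp_deriv)
  have "schwarzian f z = 2 * \<sigma>^2 / (sin (\<sigma> * z))^2 - 1/2 * (-2 * \<sigma> * cos (\<sigma> * z) / sin (\<sigma> * z))^2"
    unfolding schwarzian_def dR R[OF zB] ..
  also have "\<dots> = 2 * \<sigma>^2 * (1 - (cos (\<sigma> * z))^2) / (sin (\<sigma> * z))^2"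
    using snz[OF zB] by (simp add: field_simps power2_eq_square)
  also have "1 - (cos (\<sigma> * z))^2 = (sin (\<sigma> * z))^2" using sc[of z] by (simp add: algebra_simps)
  also have "2 * \<sigma>^2 * (sin (\<sigma> * z))^2 / (sin (\<sigma> * z))^2 = 2 * \<sigma>^2" using snz[OF zB] by simp
  finally show "schwarzian f z = 2 * (of_real s)^2" by (simp add: \<sigma>_def)
qed



lemma part2:
  fixes \<alpha> \<beta> :: real
  assumes \<alpha>: "0 \<le> \<alpha>" "\<alpha> < 1" and \<beta>: "\<beta> < (1 + \<alpha>) / 2"
  shows "\<exists>q f. classP \<beta> q \<and> classB f \<and> loc_univalent f \<and>
            (\<forall>z\<in>ball 0 1 - {0}. cmod (schwarzian f z) \<le> 2 * q (cmod z)) \<and>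
            \<not> classBC \<alpha> f"
proof -
  define m0 where "m0 = max \<beta> 0"
  have m0: "0 \<le> m0" "m0 < 1" "\<beta> \<le> m0" "m0 < (1 + \<alpha>) / 2" using \<alpha> \<beta> by (auto simp: m0_def)
  obtain s where s: "0 < s" "s \<le> pi/2" and sm: "s * cos s / sin s = m0"
    using choose_s[OF m0(1,2)] by blast
  define f :: "complex \<Rightarrow> complex" where "f = (\<lambda>z. of_real s * cos (of_real s * z) / sin (of_real s * z))"
  have P: "classP \<beta> (\<lambda>_. s^2)" using classP_const[OF s] m0 sm by simp
  have B: "classB f" unfolding f_def by (rule cot_classB[OF s])
  have LU: "loc_univalent f" unfolding loc_univalent_def
  proof
    fix z :: complex assume z: "z \<in> ball 0 1 - {0}"
    have "sin (of_real s * z) \<noteq> 0" by (rule sin_nz[OF s z])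
    then show "deriv f z \<noteq> 0" using cot_facts(1)[OF s z] s by (simp add: f_def)
  qed
  have SS: "\<forall>z\<in>ball 0 1 - {0}. cmod (schwarzian f z) \<le> 2 * s^2"
  proof
    fix z :: complex assume z: "z \<in> ball 0 1 - {0}"
    show "cmod (schwarzian f z) \<le> 2 * s^2"
      using cot_facts(3)[OF s z] by (simp add: f_def norm_mult norm_power)
  qed
  have notBC: "\<not> classBC \<alpha> f"
  proof
    assume BC: "classBC \<alpha> f"
    define \<phi> where "\<phi> = (\<lambda>t. 1 - 2 * t * s * cos (s * t) / sin (s * t))"
    have sin1: "sin s \<noteq> 0" using s sin_gt_zero[of s] pi_gt3 by auto
    have "(\<phi> \<longlongrightarrow> 1 - 2 * 1 * s * cos (s * 1) / sin (s * 1)) (at_left 1)"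
      unfolding \<phi>_def using sin1 by (intro tendsto_intros) auto
    moreover have "1 - 2 * 1 * s * cos (s * 1) / sin (s * 1) = 1 - 2 * m0" using sm[symmetric] by simp
    ultimately have lim: "(\<phi> \<longlongrightarrow> 1 - 2 * m0) (at_left 1)" by simp
    have "- \<alpha> < 1 - 2 * m0" using m0 by simp
    from order_tendstoD(1)[OF lim this] have ev1: "eventually (\<lambda>t. - \<alpha> < \<phi> t) (at_left 1)" .
    have ev2: "eventually (\<lambda>t. t \<in> {0<..<1}) (at_left (1::real))" by (rule eventually_at_left_real) simp
    obtain t where t: "- \<alpha> < \<phi> t" "t \<in> {0<..<1}"
      using eventually_happens'[OF trivial_limit_at_left_real eventually_conj[OF ev1 ev2]] by auto
    define z where "z = complex_of_real t"
    have z: "z \<in> ball 0 1 - {0}" using t by (auto simp: z_def)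
    have "1 + z * deriv (deriv f) z / deriv f z = 1 + z * (deriv (deriv f) z / deriv f z)" by simp
    also have "\<dots> = 1 + z * (-2 * of_real s * cos (of_real s * z) / sin (of_real s * z))"
      using cot_facts(2)[OF s z] by (simp add: f_def)
    also have "\<dots> = of_real (\<phi> t)"
    proof -
      have e: "of_real s * z = complex_of_real (s * t)" by (simp add: z_def)
      show ?thesis unfolding e cos_of_real sin_of_real by (simp add: \<phi>_def z_def)
    qed
    finally have "Re (1 + z * deriv (deriv f) z / deriv f z) = \<phi> t" by simp
    moreover have "Re (1 + z * deriv (deriv f) z / deriv f z) \<le> - \<alpha>" using BC z by (auto simp: classBC_def)
    ultimately show False using t by simp
  qed
  show ?thesis using P B LU SS notBC by blast
qed


theorem theorem2p7:
  fixes \<alpha> :: real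
  assumes "0 \<le> \<alpha>" and "\<alpha> < 1"
  shows "(\<forall>q f. classP ((1 + \<alpha>) / 2) q \<and> classB f \<and> loc_univalent f \<and>
            (\<forall>z\<in>ball 0 1 - {0}. cmod (schwarzian f z) \<le> 2 * q (cmod z))
            \<longrightarrow> classBC \<alpha> f)
       \<and> (\<forall>\<beta><(1 + \<alpha>) / 2. \<exists>q f. classP \<beta> q \<and> classB f \<and> loc_univalent f \<and>
            (\<forall>z\<in>ball 0 1 - {0}. cmod (schwarzian f z) \<le> 2 * q (cmod z)) \<and>
            \<not> classBC \<alpha> f)"
  using part1[OF _ _ _ _ assms(1)] part2[OF assms] by blast

end
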